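(* Let $\kappa$ be any cardinal. For a $\kappa$-downward directed multi-relational Kripke frame $M=\langle W,S\rangle$ define $N(M)=\langle W,\nu_M\rangle$ where $\nu_M(x)=\{Y\subseteq W\mid R[x]\subseteq Y\text{ for some }R\in S\}$. Then $N(M)$ is a $\kappa$-complete neighborhood frame, and for any two $\kappa$-downward directed multi-relational Kripke frames $M_1=\langle W_1,S_1\rangle$, $M_2=\langle W_2,S_2\rangle$, a map $f:W_1\to W_2$ is a homomorphism of multi-relational Kripke frames $M_1\to M_2$ if and only if it is a homomorphism of neighborhood frames $N(M_1)\to N(M_2)$. In particular $N$ (with $N(f)=f$) is a full and faithful functor $\mathbf{MKF}_\kappa\to\mathbf{NFR}_\kappa$.
   Context: For a binary relation $R$ on $W$ and $x\in W$, $R[x]=\{y\in W\mid xRy\}$. A multi-relational Kripke frame is a pair $\langle W,S\rangle$ where $W$ is a non-empty set and $S$ is a non-empty set of binary relations on $W$. For a cardinal $\kappa$, it is $\kappa$-downward directed if for every $S'\subseteq S$ with $|S'|<\kappa$ there is $R\in S$ with $R\subseteq\bigcap S'$ (with $\bigcap\emptyset=W\times W$). A homomorphism of multi-relational Kripke frames $f:\langle W_1,S_1\rangle\to\langle W_2,S_2\rangle$ is a map $f:W_1\to W_2$ such that: (i) for every $x\in W_1$ and $R_2\in S_2$ there is $R_1\in S_1$ such that for all $y\in W_1$, $xR_1y$ implies $f(x)R_2f(y)$; (ii) for every $x\in W_1$ and $R_1\in S_1$ there is $R_2\in S_2$ such that for all $u\in W_2$, if $f(x)R_2u$ then there exists $y\in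 W_1$ with $xR_1y$ and $f(y)=u$. $\mathbf{MKF}_\kappa$ is the category of $\kappa$-downward directed multi-relational Kripke frames with these homomorphisms. A neighborhood frame is a pair $\langle C,\nu\rangle$ with $C$ non-empty and $\nu:C\to\mathcal P(\mathcal P(C))$. It is $\kappa$-complete if $C\in\nu(c)$ for all $c$, $\nu(c)$ is upward closed under $\subseteq$ for all $c$, and $\bigcap S'\in\nu(c)$ for every $c\in C$ and every non-empty $S'\subseteq\nu(c)$ with $|S'|<\kappa$. A homomorphism of neighborhood frames $f:\langle C_1,\nu_1\rangle\to\langle C_2,\nu_2\rangle$ is a map $f:C_1\to C_2$ such that for all $c\in C_1$, $X\subseteq C_2$: $f^{-1}[X]\in\nu_1(c)\iff X\in\nu_2(f(c))$. $\mathbf{NFR}_\kappa$ is the category of $\kappa$-complete neighborhood frames with these homomorphisms. *)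

theory Defs
  imports Main
begin

text \<open>Cardinals are represented as in the BNF cardinal library of Main: a cardinal
  kappa is a relation with Card_order kappa, and "|A| < kappa" is card_of A <o kappa.\<close>

definition mkf :: "'a set \<Rightarrow> 'a rel set \<Rightarrow> bool" where
  "mkf W S \<longleftrightarrow> W \<noteq> {} \<and> S \<noteq> {} \<and> (\<forall>R\<in>S. R \<subseteq> W \<times> W)"

definition down_directed :: "'k rel \<Rightarrow> 'a set \<Rightarrow> 'a rel set \<Rightarrow> bool" where
  "down_directed \<kappa> W S \<longleftrightarrow>
     (\<forall>S'. S' \<subseteq> S \<and> (card_of S', \<kappa>) \<in> ordLess \<longrightarrow>
        (\<exists>R\<in>S. R \<subseteq> (if S' = {} then W \<times> W else \<Inter>S')))"

definition mkf_kappa :: "'k rel \<Rightarrow> 'a set \<Rightarrow> 'a rel set \<Rightarrow> bool" where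
  "mkf_kappa \<kappa> W S \<longleftrightarrow> mkf W S \<and> down_directed \<kappa> W S"

definition mkf_hom ::
  "'a set \<Rightarrow> 'a rel set \<Rightarrow> 'b set \<Rightarrow> 'b rel set \<Rightarrow> ('a \<Rightarrow> 'b) \<Rightarrow> bool" where
  "mkf_hom W1 S1 W2 S2 f \<longleftrightarrow>
     f ` W1 \<subseteq> W2 \<and>
     (\<forall>x\<in>W1. \<forall>R2\<in>S2. \<exists>R1\<in>S1. \<forall>y\<in>W1. (x, y) \<in> R1 \<longrightarrow> (f x, f y) \<in> R2) \<and>
     (\<forall>x\<in>W1. \<forall>R1\<in>S1. \<exists>R2\<in>S2. \<forall>u\<in>W2.
        (f x, u) \<in> R2 \<longrightarrow> (\<exists>y\<in>W1. (x, y) \<in> R1 \<and> f y = u))"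

definition nfr :: "'a set \<Rightarrow> ('a \<Rightarrow> 'a set set) \<Rightarrow> bool" where
  "nfr C \<nu> \<longleftrightarrow> C \<noteq> {} \<and> (\<forall>c\<in>C. \<nu> c \<subseteq> Pow C)"

definition nfr_complete :: "'k rel \<Rightarrow> 'a set \<Rightarrow> ('a \<Rightarrow> 'a set set) \<Rightarrow> bool" where
  "nfr_complete \<kappa> C \<nu> \<longleftrightarrow> nfr C \<nu> \<and>
     (\<forall>c\<in>C. C \<in> \<nu> c) \<and>
     (\<forall>c\<in>C. \<forall>X Y. X \<in> \<nu> c \<and> X \<subseteq> Y \<and> Y \<subseteq> C \<longrightarrow> Y \<in> \<nu> c) \<and>
     (\<forall>c\<in>C. \<forall>S'. S' \<subseteq> \<nu> c \<and> S' \<noteq> {} \<and> (card_of S', \<kappa>) \<in> ordLess \<longrightarrow> \<Inter>S' \<in> \<nu> c)"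

definition nfr_hom ::
  "'a set \<Rightarrow> ('a \<Rightarrow> 'a set set) \<Rightarrow> 'b set \<Rightarrow> ('b \<Rightarrow> 'b set set) \<Rightarrow> ('a \<Rightarrow> 'b) \<Rightarrow> bool" where
  "nfr_hom C1 \<nu>1 C2 \<nu>2 f \<longleftrightarrow>
     f ` C1 \<subseteq> C2 \<and>
     (\<forall>c\<in>C1. \<forall>X. X \<subseteq> C2 \<longrightarrow> ((f -` X \<inter> C1) \<in> \<nu>1 c \<longleftrightarrow> X \<in> \<nu>2 (f c)))"

definition nu_of :: "'a set \<Rightarrow> 'a rel set \<Rightarrow> 'a \<Rightarrow> 'a set set" where
  "nu_of W S x = {Y. Y \<subseteq> W \<and> (\<exists>R\<in>S. R `` {x} \<subseteq> Y)}"

end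

theory Submission
  imports Defs
begin

lemma part1:
  assumes "mkf_kappa \<kappa> W S"
  shows "nfr_complete \<kappa> W (nu_of W S)"
proof -
  have m: "W \<noteq> {}" "S \<noteq> {}" "\<And>R. R\<in>S \<Longrightarrow> R \<subseteq> W \<times> W"
    using assms by (auto simp: mkf_kappa_def mkf_def)
  have dd: "down_directed \<kappa> W S" using assms by (simp add: mkf_kappa_def)
  have a: "\<forall>c\<in>W. W \<in> nu_of W S c"
  proof
    fix c assume "c \<in> W"
    obtain R where "R \<in> S" using m(2) by blast
    hence "R `` {c} \<subseteq> W" using m(3) by blast
    thus "W \<in> nu_of W S c" using \<open>R \<in> S\<close> by (auto simp: nu_of_def)
  qed
  have b: "\<forall>c\<in>W. \<forall>X Y. X \<in> nu_of W S c \<and> X \<subseteq> Y \<and> Y \<subseteq> W \<longrightarrow> Y \<in> nu_of W S c"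
    by (auto simp: nu_of_def)
  have c: "\<Inter>S' \<in> nu_of W S c"
    if "S' \<subseteq> nu_of W S c" "S' \<noteq> {}" "(card_of S', \<kappa>) \<in> ordLess" for c S'
  proof -
    have "\<forall>Y\<in>S'. \<exists>R\<in>S. R `` {c} \<subseteq> Y" using that(1) by (auto simp: nu_of_def)
    then obtain g where g: "\<And>Y. Y\<in>S' \<Longrightarrow> g Y \<in> S \<and> g Y `` {c} \<subseteq> Y" by metis
    have "(card_of (g ` S'), card_of S') \<in> ordLeq" by (rule card_of_image)
    hence lt: "(card_of (g ` S'), \<kappa>) \<in> ordLess" using that(3) ordLeq_ordLess_trans by blast
    have ne: "g ` S' \<noteq> {}" using that(2) by auto
    have sub: "g ` S' \<subseteq> S" using g by blast
    have "\<exists>R\<in>S. R \<subseteq> (if g ` S' = {} then W \<times> W else \<Inter>(g ` S'))"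
      using dd sub lt unfolding down_directed_def by blast
    then obtain R where R: "R \<in> S" "R \<subseteq> \<Inter>(g ` S')"
      using ne by auto
    have "R `` {c} \<subseteq> \<Inter>S'" using R g by blast
    moreover have "\<Inter>S' \<subseteq> W" using that(1,2) by (auto simp: nu_of_def)
    ultimately show ?thesis using R by (auto simp: nu_of_def)
  qed
  have d: "\<forall>c\<in>W. nu_of W S c \<subseteq> Pow W" by (auto simp: nu_of_def)
  show ?thesis unfolding nfr_complete_def nfr_def
    using a b c m(1) d by blast
qed

lemma part2:
  assumes "mkf_kappa \<kappa> W1 S1" "mkf_kappa \<kappa> W2 S2" "f ` W1 \<subseteq> W2"
  shows "mkf_hom W1 S1 W2 S2 f \<longleftrightarrow> nfr_hom W1 (nu_of W1 S1) W2 (nu_of W2 S2) f"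
proof
  have s1: "\<And>R. R\<in>S1 \<Longrightarrow> R \<subseteq> W1 \<times> W1" and s2: "\<And>R. R\<in>S2 \<Longrightarrow> R \<subseteq> W2 \<times> W2"
    using assms by (auto simp: mkf_kappa_def mkf_def)
  {
    assume h: "mkf_hom W1 S1 W2 S2 f"
    have "(f -` X \<inter> W1 \<in> nu_of W1 S1 c) \<longleftrightarrow> X \<in> nu_of W2 S2 (f c)"
      if c: "c \<in> W1" and X: "X \<subseteq> W2" for c X
    proof
      assume "f -` X \<inter> W1 \<in> nu_of W1 S1 c"
      then obtain R1 where R1: "R1\<in>S1" "R1``{c} \<subseteq> f -` X \<inter> W1" by (auto simp: nu_of_def)
      obtain R2 where R2: "R2\<in>S2" "\<forall>u\<in>W2. (f c, u) \<in> R2 \<longrightarrow> (\<exists>y\<in>W1. (c, y) \<in> R1 \<and> f y = u)"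
        using h c R1(1) unfolding mkf_hom_def by blast
      have "R2``{f c} \<subseteq> X"
      proof
        fix u assume "u \<in> R2``{f c}"
        hence "(f c, u) \<in> R2" "u \<in> W2" using s2[OF R2(1)] by auto
        then obtain y where "(c,y)\<in>R1" "f y = u" using R2 by blast
        thus "u \<in> X" using R1 by auto
      qed
      thus "X \<in> nu_of W2 S2 (f c)" using R2 X by (auto simp: nu_of_def)
    next
      assume "X \<in> nu_of W2 S2 (f c)"
      then obtain R2 where R2: "R2\<in>S2" "R2``{f c} \<subseteq> X" by (auto simp: nu_of_def)
      obtain R1 where R1: "R1\<in>S1" "\<forall>y\<in>W1. (c, y) \<in> R1 \<longrightarrow> (f c, f y) \<in> R2"
        using h c R2(1) unfolding mkf_hom_def by blast
      have "R1``{c} \<subseteq> f -` X \<inter> W1" using R1 R2 s1[OF R1(1)] by blast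
      thus "f -` X \<inter> W1 \<in> nu_of W1 S1 c" using R1 by (auto simp: nu_of_def)
    qed
    thus "nfr_hom W1 (nu_of W1 S1) W2 (nu_of W2 S2) f"
      using assms(3) unfolding nfr_hom_def by blast
  }
  {
    assume h: "nfr_hom W1 (nu_of W1 S1) W2 (nu_of W2 S2) f"
    have i: "\<exists>R1\<in>S1. \<forall>y\<in>W1. (x, y) \<in> R1 \<longrightarrow> (f x, f y) \<in> R2"
      if x: "x \<in> W1" and R2: "R2 \<in> S2" for x R2
    proof -
      let ?X = "R2``{f x}"
      have "?X \<subseteq> W2" using s2[OF R2] by auto
      moreover have "?X \<in> nu_of W2 S2 (f x)" using R2 s2[OF R2] by (auto simp: nu_of_def)
      ultimately have "f -` ?X \<inter> W1 \<in> nu_of W1 S1 x" using h x unfolding nfr_hom_def by blast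
      then obtain R1 where "R1 \<in> S1" "R1``{x} \<subseteq> f -` ?X \<inter> W1" by (auto simp: nu_of_def)
      thus ?thesis by blast
    qed
    have ii: "\<exists>R2\<in>S2. \<forall>u\<in>W2. (f x, u) \<in> R2 \<longrightarrow> (\<exists>y\<in>W1. (x, y) \<in> R1 \<and> f y = u)"
      if x: "x \<in> W1" and R1: "R1 \<in> S1" for x R1
    proof -
      let ?X = "f ` (R1``{x})"
      have "?X \<subseteq> W2" using s1[OF R1] assms(3) by auto
      moreover have "f -` ?X \<inter> W1 \<in> nu_of W1 S1 x"
        using R1 s1[OF R1] unfolding nu_of_def by blast
      ultimately have "?X \<in> nu_of W2 S2 (f x)" using h x unfolding nfr_hom_def by blast
      then obtain R2 where "R2 \<in> S2" "R2``{f x} \<subseteq> ?X" by (auto simp: nu_of_def)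
      thus ?thesis using s1[OF R1] by blast
    qed
    show "mkf_hom W1 S1 W2 S2 f" using i ii assms(3) unfolding mkf_hom_def by blast
  }
qed

theorem lemma6p2:
  fixes \<kappa> :: "'k rel"
    and W :: "'a set" and S :: "'a rel set"
    and W1 :: "'a set" and S1 :: "'a rel set"
    and W2 :: "'b set" and S2 :: "'b rel set"
  assumes "Card_order \<kappa>"
  shows "(mkf_kappa \<kappa> W S \<longrightarrow> nfr_complete \<kappa> W (nu_of W S))
    \<and> (mkf_kappa \<kappa> W1 S1 \<longrightarrow> mkf_kappa \<kappa> W2 S2 \<longrightarrow>
        (\<forall>f. f ` W1 \<subseteq> W2 \<longrightarrow>
          (mkf_hom W1 S1 W2 S2 f \<longleftrightarrow> nfr_hom W1 (nu_of W1 S1) W2 (nu_of W2 S2) f)))"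
proof (intro conjI impI allI)
  show "mkf_kappa \<kappa> W S \<Longrightarrow> nfr_complete \<kappa> W (nu_of W S)" by (rule part1)
next
  fix f :: "'a \<Rightarrow> 'b"
  assume "mkf_kappa \<kappa> W1 S1" "mkf_kappa \<kappa> W2 S2" "f ` W1 \<subseteq> W2"
  thus "mkf_hom W1 S1 W2 S2 f \<longleftrightarrow> nfr_hom W1 (nu_of W1 S1) W2 (nu_of W2 S2) f"
    by (rule part2)
qed

end
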